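(* Under the assumptions of the context, with $\alpha_{w,t}\le c/(mt)$ for some $c>0$, let $d^{(w)}_t:=\|w_{t,m}-w'_{t,m}\|$ be the distance between the weights of the coupled runs after outer step $t$. Then, over the randomness of $B_t$, $$\mathbb E[d^{(w)}_t]+\frac{2L}{n\beta}\le\Big(1+\frac{\beta c}{t}(1+\alpha_{w,t}\beta+\alpha_\delta\varepsilon\psi\beta)^{m-1}\Big)\Big(\mathbb E[d^{(w)}_{t-1}]+\frac{2L}{n\beta}\Big).$$
   Context: Loss $h(w,\delta;z)$, $w\in W$ Euclidean, Euclidean norms, $\Delta=\{\delta:\|\delta\|_2\le\varepsilon\}$. Assumption 1: for every $z$, and all $w,w'\in W$, $\delta,\delta'\in\Delta$: $|h(w,\delta;z)-h(w',\delta';z)|^2\le L^2(\|w-w'\|^2+\|\delta-\delta'\|^2)$ and $|h(w,\delta;z)-h(w',\delta;z)|\le L_w\|w-w'\|$. Assumption 2: for every $z$, $h(\cdot,\cdot;z)$ is continuously differentiable and $\|\nabla_w h(w,\delta;z)-\nabla_w h(w',\delta';z)\|^2+\|\nabla_\delta h(w,\delta;z)-\nabla_\delta h(w',\delta';z)\|^2\le\beta^2(\|w-w'\|^2+\|\delta-\delta'\|^2)$. Gradient lower bound: there is $\psi>0$ such that with probability 1 every gradient $\nabla_\delta h(w,\delta;z)$ evaluated during training satisfies $\|\nabla_\delta h(w,\delta;z)\|\ge1/\psi$. Operators: $\mathcal P_\Delta(g)=\arg\min_{\delta\in\Delta}\|g-\delta\|$ and $\pi_\Delta(g)=\varepsilon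 g/\|g\|$ (the nearest extreme point of $\Delta$). Algorithm $A_{\text{Free}}$ (free step $m$, batch size $b$, weight step size $\alpha_{w,t}$ at outer step $t$, attack step size $\alpha_\delta$): for each outer step $t$: draw a uniformly random mini-batch $B_t\subset S$ of size $b$; initialize $\delta_j$ uniformly in $\Delta$ for each $z_j\in B_t$; $w_{t,0}=w_{t-1}$; for $i=0,\dots,m-1$: $g_w=\frac1b\sum_{z_j\in B_t}\nabla_w h(w_{t,i},\delta_j;z_j)$, $g_{\delta,j}=\nabla_\delta h(w_{t,i},\delta_j;z_j)$; $w_{t,i+1}=w_{t,i}-\alpha_{w,t}g_w$; $\delta_j\leftarrow\mathcal P_\Delta(\delta_j+\alpha_\delta\pi_\Delta(g_{\delta,j}))$; finally $w_t=w_{t,m}$. Coupling: $S,S'$ of size $n$ differ only in one sample $s$; both runs use the same initialization, the same mini-batch index sets (so the batches differ only when $s\in B_t$, which has probability $b/n$, independently of the past) and the same perturbation initializations. *)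

theory Defs
  imports "HOL-Analysis.Analysis" "HOL-Probability.Probability"
begin

definition pert_set :: "real \<Rightarrow> 'd::euclidean_space set" where
  "pert_set eps = cball 0 eps"

definition proj_Delta :: "real \<Rightarrow> 'd::euclidean_space \<Rightarrow> 'd" where
  "proj_Delta eps g = closest_point (pert_set eps) g"

text \<open>Nearest extreme point of Delta: eps g / norm g.\<close>
definition pi_Delta :: "real \<Rightarrow> 'd::euclidean_space \<Rightarrow> 'd" where
  "pi_Delta eps g = (eps / norm g) *\<^sub>R g"

definition batches :: "nat \<Rightarrow> nat \<Rightarrow> nat set set" where
  "batches n b = {B. B \<subseteq> {..<n} \<and> card B = b}"

text \<open>One inner ("free") step of A_Free on batch B of the data set S.
  State = (weights, perturbations indexed by sample index).
  gw, gd are the partial gradients of the loss in w and delta.\<close>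
definition free_inner_step ::
  "('w::euclidean_space \<Rightarrow> 'd::euclidean_space \<Rightarrow> 'z \<Rightarrow> 'w) \<Rightarrow>
   ('w \<Rightarrow> 'd \<Rightarrow> 'z \<Rightarrow> 'd) \<Rightarrow> real \<Rightarrow> real \<Rightarrow> real \<Rightarrow>
   (nat \<Rightarrow> 'z) \<Rightarrow> nat set \<Rightarrow> 'w \<times> (nat \<Rightarrow> 'd) \<Rightarrow> 'w \<times> (nat \<Rightarrow> 'd)" where
  "free_inner_step gw gd eps aw ad S B st =
     (let w = fst st; dl = snd st;
          g_w = (1 / real (card B)) *\<^sub>R (\<Sum>j\<in>B. gw w (dl j) (S j))
      in (w - aw *\<^sub>R g_w,
          (\<lambda>j. if j \<in> B
               then proj_Delta eps (dl j + ad *\<^sub>R pi_Delta eps (gd w (dl j) (S j)))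
               else dl j)))"

definition free_state ::
  "('w::euclidean_space \<Rightarrow> 'd::euclidean_space \<Rightarrow> 'z \<Rightarrow> 'w) \<Rightarrow>
   ('w \<Rightarrow> 'd \<Rightarrow> 'z \<Rightarrow> 'd) \<Rightarrow> real \<Rightarrow> real \<Rightarrow> real \<Rightarrow>
   (nat \<Rightarrow> 'z) \<Rightarrow> nat set \<Rightarrow> 'w \<Rightarrow> (nat \<Rightarrow> 'd) \<Rightarrow> nat \<Rightarrow> 'w \<times> (nat \<Rightarrow> 'd)" where
  "free_state gw gd eps aw ad S B w0 d0 i =
     (free_inner_step gw gd eps aw ad S B ^^ i) (w0, d0)"

definition free_outer ::
  "('w::euclidean_space \<Rightarrow> 'd::euclidean_space \<Rightarrow> 'z \<Rightarrow> 'w) \<Rightarrow>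
   ('w \<Rightarrow> 'd \<Rightarrow> 'z \<Rightarrow> 'd) \<Rightarrow> real \<Rightarrow> real \<Rightarrow> real \<Rightarrow> nat \<Rightarrow>
   (nat \<Rightarrow> 'z) \<Rightarrow> nat set \<Rightarrow> 'w \<Rightarrow> (nat \<Rightarrow> 'd) \<Rightarrow> 'w" where
  "free_outer gw gd eps aw ad m S B w0 d0 = fst (free_state gw gd eps aw ad S B w0 d0 m)"

end

theory Submission imports Defs begin

lemma unit_diff_sq:
  fixes u v :: "'a::real_inner"
  assumes "u \<noteq> 0" "v \<noteq> 0"
  shows "norm u * norm v * (norm ((1/norm u) *\<^sub>R u - (1/norm v) *\<^sub>R v))\<^sup>2 \<le> (norm (u - v))\<^sup>2"
proof -
  have nu: "norm u > 0" "norm v > 0" using assms by auto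
  have uu: "u \<bullet> u = (norm u)\<^sup>2" "v \<bullet> v = (norm v)\<^sup>2" by (simp_all add: power2_norm_eq_inner)
  have "(norm ((1/norm u) *\<^sub>R u - (1/norm v) *\<^sub>R v))\<^sup>2
       = ((1/norm u) *\<^sub>R u - (1/norm v) *\<^sub>R v) \<bullet> ((1/norm u) *\<^sub>R u - (1/norm v) *\<^sub>R v)"
    by (rule power2_norm_eq_inner)
  also have "\<dots> = (1/norm u)^2 * (u \<bullet> u) + (1/norm v)^2 * (v \<bullet> v) - 2 * (u \<bullet> v) / (norm u * norm v)"
    by (simp add: inner_diff_left inner_diff_right inner_commute power2_eq_square)
  also have "\<dots> = 2 - 2 * (u \<bullet> v) / (norm u * norm v)"
    using nu by (simp add: uu power2_eq_square)
  finally have e1: "(norm ((1/norm u) *\<^sub>R u - (1/norm v) *\<^sub>R v))\<^sup>2 = 2 - 2 * (u \<bullet> v) / (norm u * norm v)" .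
  have "(norm (u - v))\<^sup>2 = (u - v) \<bullet> (u - v)" by (rule power2_norm_eq_inner)
  also have "\<dots> = (norm u)\<^sup>2 + (norm v)\<^sup>2 - 2 * (u \<bullet> v)"
    by (simp add: inner_diff_left inner_diff_right inner_commute uu)
  finally have e2: "(norm (u - v))\<^sup>2 = (norm u)\<^sup>2 + (norm v)\<^sup>2 - 2 * (u \<bullet> v)" .
  have "norm u * norm v * (2 - 2 * (u \<bullet> v) / (norm u * norm v)) = 2 * norm u * norm v - 2 * (u \<bullet> v)"
    using nu by (simp add: field_simps)
  moreover have "2 * norm u * norm v \<le> (norm u)\<^sup>2 + (norm v)\<^sup>2"
    using sum_squares_bound[of "norm u" "norm v"] by simp
  ultimately show ?thesis using e1 e2 by simp
qed

lemma pi_lip: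
  fixes u v :: "'a::real_inner"
  assumes "norm u \<ge> r" "norm v \<ge> r" "r > 0" "eps \<ge> 0"
  shows "norm ((eps/norm u) *\<^sub>R u - (eps/norm v) *\<^sub>R v) \<le> eps / r * norm (u - v)"
proof -
  have nz: "u \<noteq> 0" "v \<noteq> 0" using assms by auto
  let ?x = "norm ((1/norm u) *\<^sub>R u - (1/norm v) *\<^sub>R v)"
  have "r * r * ?x\<^sup>2 \<le> norm u * norm v * ?x\<^sup>2"
  proof (rule mult_right_mono)
    show "r * r \<le> norm u * norm v" by (rule mult_mono) (use assms in auto)
  qed simp
  also have "\<dots> \<le> (norm (u - v))\<^sup>2" by (rule unit_diff_sq[OF nz])
  finally have "r\<^sup>2 * ?x\<^sup>2 \<le> (norm (u - v))\<^sup>2" by (simp add: power2_eq_square)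
  hence "(r * ?x)\<^sup>2 \<le> (norm (u - v))\<^sup>2" by (simp add: power_mult_distrib)
  hence "r * ?x \<le> norm (u - v)" by (rule power2_le_imp_le) simp
  hence "?x \<le> norm (u - v) / r" using assms(3) by (simp add: le_divide_eq mult.commute)
  moreover have "(eps/norm u) *\<^sub>R u - (eps/norm v) *\<^sub>R v = eps *\<^sub>R ((1/norm u) *\<^sub>R u - (1/norm v) *\<^sub>R v)"
    by (simp add: scaleR_diff_right)
  moreover have "eps * ?x \<le> eps * (norm (u - v) / r)"
    by (rule mult_left_mono) (use calculation(1) assms(4) in auto)
  ultimately have "norm ((eps/norm u) *\<^sub>R u - (eps/norm v) *\<^sub>R v) \<le> eps * (norm (u - v) / r)"
    using assms(4) by simp
  thus ?thesis by simp
qed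

lemma deriv_norm_bound:
  fixes f :: "'a::real_inner \<Rightarrow> real"
  assumes der: "(f has_derivative (\<lambda>v. g \<bullet> v)) (at w)"
    and lipf: "\<And>x y. \<bar>f x - f y\<bar> \<le> L * norm (x - y)" and L0: "L \<ge> 0"
  shows "norm g \<le> L"
proof -
  define \<phi> where "\<phi> t = f (w + t *\<^sub>R g)" for t :: real
  have d1: "((\<lambda>t::real. w + t *\<^sub>R g) has_derivative (\<lambda>t. t *\<^sub>R g)) (at 0)"
    by (auto intro!: derivative_eq_intros)
  have der0: "(f has_derivative (\<lambda>v. g \<bullet> v)) (at (w + 0 *\<^sub>R g))" using der by simp
  have "(\<phi> has_derivative (\<lambda>t. g \<bullet> (t *\<^sub>R g))) (at 0)"
    unfolding \<phi>_def using has_derivative_compose[OF d1 der0] by (simp add: o_def)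
  moreover have "(\<lambda>t. g \<bullet> (t *\<^sub>R g)) = (*) (g \<bullet> g)" by (auto simp: fun_eq_iff)
  ultimately have "(\<phi> has_field_derivative (g \<bullet> g)) (at 0)"
    by (simp add: has_field_derivative_def)
  hence lim: "((\<lambda>y. (\<phi> y - \<phi> 0) / (y - 0)) \<longlongrightarrow> g \<bullet> g) (at (0::real))"
    using has_field_derivative_iff by blast
  have ev: "\<forall>\<^sub>F y in at (0::real). \<bar>(\<phi> y - \<phi> 0) / (y - 0)\<bar> \<le> L * norm g"
  proof (rule eventually_at_topological[THEN iffD2], intro exI[of _ UNIV] conjI ballI impI; simp?)
    fix y :: real assume "y \<noteq> 0"
    have "\<bar>\<phi> y - \<phi> 0\<bar> \<le> L * norm (y *\<^sub>R g)"
      unfolding \<phi>_def using lipf[of "w + y *\<^sub>R g" "w + 0 *\<^sub>R g"] by simp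
    also have "\<dots> = \<bar>y\<bar> * (L * norm g)" by simp
    finally show "\<bar>\<phi> y - \<phi> 0\<bar> / \<bar>y\<bar> \<le> L * norm g" using \<open>y \<noteq> 0\<close>
      by (simp add: divide_le_eq mult.commute)
  qed
  have "\<bar>g \<bullet> g\<bar> \<le> L * norm g"
    by (rule tendsto_le[OF _ tendsto_const tendsto_rabs[OF lim] ev]) simp
  hence "norm g * norm g \<le> L * norm g" by (simp add: power2_norm_eq_inner[symmetric] power2_eq_square)
  thus ?thesis
    by (cases "norm g = 0") (use L0 in auto)
qed

lemma card_batches_s:
  assumes "s < n" "1 \<le> b"
  shows "real (card {B \<in> batches n b. s \<in> B}) * real n = real b * real (card (batches n b))"
proof -
  let ?C = "{C. C \<subseteq> {..<n} - {s} \<and> card C = b - 1}"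
  have inj: "inj_on (insert s) ?C"
    by (auto simp: inj_on_def)
  have img: "insert s ` ?C = {B \<in> batches n b. s \<in> B}"
  proof (rule set_eqI, rule iffI)
    fix B assume "B \<in> insert s ` ?C"
    then obtain C where C: "C \<subseteq> {..<n} - {s}" "card C = b - 1" "B = insert s C" by auto
    have "finite C" using C(1) finite_subset by blast
    moreover have "s \<notin> C" using C(1) by auto
    ultimately have "card B = b" using C assms by simp
    thus "B \<in> {B \<in> batches n b. s \<in> B}" using C assms by (auto simp: batches_def)
  next
    fix B assume B: "B \<in> {B \<in> batches n b. s \<in> B}"
    hence fin: "finite B" by (auto simp: batches_def intro: finite_subset)
    have "B = insert s (B - {s})" using B by auto
    moreover have "B - {s} \<in> ?C" using B fin by (auto simp: batches_def)
    ultimately show "B \<in> insert s ` ?C" by blast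
  qed
  have c1: "card {B \<in> batches n b. s \<in> B} = (n - 1) choose (b - 1)"
    using card_image[OF inj] img n_subsets[of "{..<n} - {s}" "b - 1"] assms by simp
  have c2: "card (batches n b) = n choose b"
    using n_subsets[of "{..<n}" b] by (simp add: batches_def)
  have "b * (n choose b) = n * ((n - 1) choose (b - 1))"
    using times_binomial_minus1_eq[of b n] assms by simp
  hence "real b * real (n choose b) = real n * real ((n - 1) choose (b - 1))"
    by (metis of_nat_mult)
  thus ?thesis using c1 c2 by (simp add: mult.commute)
qed

lemma sq_split_bound:
  fixes x y B D E :: real
  assumes "x\<^sup>2 + y\<^sup>2 \<le> B\<^sup>2 * (D\<^sup>2 + E\<^sup>2)" "B \<ge> 0" "D \<ge> 0" "E \<ge> 0" "x \<ge> 0" "y \<ge> 0"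
  shows "x \<le> B * (D + E)" "y \<le> B * (D + E)"
proof -
  have "D\<^sup>2 + E\<^sup>2 \<le> (D + E)\<^sup>2" using assms by (simp add: power2_sum)
  hence "B\<^sup>2 * (D\<^sup>2 + E\<^sup>2) \<le> (B * (D + E))\<^sup>2"
    by (simp add: power_mult_distrib mult_left_mono)
  hence h: "x\<^sup>2 \<le> (B * (D + E))\<^sup>2" "y\<^sup>2 \<le> (B * (D + E))\<^sup>2"
    using assms(1) zero_le_power2[of x] zero_le_power2[of y] by linarith+
  show "x \<le> B * (D + E)" by (rule power2_le_imp_le[OF h(1)]) (use assms in simp)
  show "y \<le> B * (D + E)" by (rule power2_le_imp_le[OF h(2)]) (use assms in simp)
qed

theorem lemma6:
  fixes h :: "'w::euclidean_space \<Rightarrow> 'd::euclidean_space \<Rightarrow> 'z \<Rightarrow> real"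
    and gw :: "'w \<Rightarrow> 'd \<Rightarrow> 'z \<Rightarrow> 'w"
    and gd :: "'w \<Rightarrow> 'd \<Rightarrow> 'z \<Rightarrow> 'd"
    and S S' :: "nat \<Rightarrow> 'z"
    and d0 :: "nat \<Rightarrow> 'd"
    and w_prev w'_prev :: 'w
    and L Lw \<beta> \<psi> eps c aw ad :: real
    and n b m t s :: nat
  assumes eps_pos: "eps > 0"
    and L_pos: "L > 0" and Lw_nonneg: "Lw \<ge> 0" and beta_pos: "\<beta> > 0" and psi_pos: "\<psi> > 0"
    \<comment> \<open>gradients: h(.,.;z) is continuously differentiable on W x Delta with partial gradients gw, gd\<close>
    and grad: "\<And>z w \<delta>. \<delta> \<in> pert_set eps \<Longrightarrow>
        ((\<lambda>p. h (fst p) (snd p) z) has_derivative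
           (\<lambda>v. gw w \<delta> z \<bullet> fst v + gd w \<delta> z \<bullet> snd v))
        (at (w, \<delta>) within (UNIV \<times> pert_set eps))"
    and grad_cont: "\<And>z. continuous_on (UNIV \<times> pert_set eps) (\<lambda>p. gw (fst p) (snd p) z)"
    and grad_cont': "\<And>z. continuous_on (UNIV \<times> pert_set eps) (\<lambda>p. gd (fst p) (snd p) z)"
    \<comment> \<open>Assumption 1\<close>
    and lip: "\<And>z w w' \<delta> \<delta>'. \<delta> \<in> pert_set eps \<Longrightarrow> \<delta>' \<in> pert_set eps \<Longrightarrow>
        \<bar>h w \<delta> z - h w' \<delta>' z\<bar>\<^sup>2 \<le> L\<^sup>2 * ((norm (w - w'))\<^sup>2 + (norm (\<delta> - \<delta>'))\<^sup>2)"
    and lip_w: "\<And>z w w' \<delta>. \<delta> \<in> pert_set eps \<Longrightarrow>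
        \<bar>h w \<delta> z - h w' \<delta> z\<bar> \<le> Lw * norm (w - w')"
    \<comment> \<open>Assumption 2\<close>
    and smooth: "\<And>z w w' \<delta> \<delta>'. \<delta> \<in> pert_set eps \<Longrightarrow> \<delta>' \<in> pert_set eps \<Longrightarrow>
        (norm (gw w \<delta> z - gw w' \<delta>' z))\<^sup>2 + (norm (gd w \<delta> z - gd w' \<delta>' z))\<^sup>2
          \<le> \<beta>\<^sup>2 * ((norm (w - w'))\<^sup>2 + (norm (\<delta> - \<delta>'))\<^sup>2)"
    \<comment> \<open>data sets of size n differing only in sample s\<close>
    and s_lt: "s < n"
    and S_S': "\<And>j. j \<noteq> s \<Longrightarrow> S' j = S j"
    \<comment> \<open>algorithm parameters\<close>
    and b_pos: "1 \<le> b" and b_le: "b \<le> n"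
    and m_pos: "1 \<le> m"
    and t_pos: "1 \<le> t"
    and c_pos: "c > 0"
    and aw_pos: "aw > 0" and aw_le: "aw \<le> c / (real m * real t)"
    and ad_pos: "ad > 0"
    \<comment> \<open>common perturbation initialisation inside Delta\<close>
    and d0_in: "\<And>j. d0 j \<in> pert_set eps"
    \<comment> \<open>gradient lower bound for every gradient in delta evaluated during the two runs\<close>
    and grad_lb: "\<And>B i j. B \<in> batches n b \<Longrightarrow> i < m \<Longrightarrow> j \<in> B \<Longrightarrow>
        norm (gd (fst (free_state gw gd eps aw ad S B w_prev d0 i))
                 (snd (free_state gw gd eps aw ad S B w_prev d0 i) j) (S j)) \<ge> 1 / \<psi>"
    and grad_lb': "\<And>B i j. B \<in> batches n b \<Longrightarrow> i < m \<Longrightarrow> j \<in> B \<Longrightarrow>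
        norm (gd (fst (free_state gw gd eps aw ad S' B w'_prev d0 i))
                 (snd (free_state gw gd eps aw ad S' B w'_prev d0 i) j) (S' j)) \<ge> 1 / \<psi>"
  shows "measure_pmf.expectation (pmf_of_set (batches n b))
           (\<lambda>B. norm (free_outer gw gd eps aw ad m S B w_prev d0
                       - free_outer gw gd eps aw ad m S' B w'_prev d0))
         + 2 * L / (real n * \<beta>)
       \<le> (1 + \<beta> * c / real t * (1 + aw * \<beta> + ad * eps * \<psi> * \<beta>) ^ (m - 1))
         * (norm (w_prev - w'_prev) + 2 * L / (real n * \<beta>))"
proof -
  let ?P = "pert_set eps :: 'd set"
  have Pconv: "convex ?P" "closed ?P" "?P \<noteq> {}"
    using eps_pos by (auto simp: pert_set_def intro!: exI[of _ 0])
  have proj_in: "\<And>x::'d. proj_Delta eps x \<in> ?P"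
    by (simp add: proj_Delta_def closest_point_in_set Pconv)
  have proj_lip: "\<And>x y::'d. norm (proj_Delta eps x - proj_Delta eps y) \<le> norm (x - y)"
    using closest_point_lipschitz[OF Pconv] by (simp add: proj_Delta_def dist_norm)
  have gwb: "\<And>z w \<delta>. \<delta> \<in> ?P \<Longrightarrow> norm (gw w \<delta> z) \<le> L"
  proof -
    fix z :: 'z and w :: 'w and \<delta> :: 'd assume \<delta>: "\<delta> \<in> ?P"
    have G: "\<And>p. p \<in> UNIV \<times> ?P \<Longrightarrow> ((\<lambda>p. h (fst p) (snd p) z) has_derivative
        (\<lambda>v. gw (fst p) (snd p) z \<bullet> fst v + gd (fst p) (snd p) z \<bullet> snd v)) (at p within UNIV \<times> ?P)"
      by (case_tac p) (simp add: grad)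
    have pd: "((\<lambda>x. (x, \<delta>)) has_derivative (\<lambda>v. (v, 0))) (at w within UNIV)"
      by (auto intro!: derivative_eq_intros)
    have "((\<lambda>x. h (fst (x, \<delta>)) (snd (x, \<delta>)) z) has_derivative
        (\<lambda>y. gw (fst (w, \<delta>)) (snd (w, \<delta>)) z \<bullet> fst (y, 0::'d) + gd (fst (w, \<delta>)) (snd (w, \<delta>)) z \<bullet> snd (y, 0::'d)))
        (at w within UNIV)"
      by (rule has_derivative_in_compose2[OF G _ _ pd]) (use \<delta> in auto)
    hence d: "((\<lambda>x. h x \<delta> z) has_derivative (\<lambda>v. gw w \<delta> z \<bullet> v)) (at w)" by simp
    have lipx: "\<And>x y. \<bar>h x \<delta> z - h y \<delta> z\<bar> \<le> L * norm (x - y)"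
    proof -
      fix x y
      have "\<bar>h x \<delta> z - h y \<delta> z\<bar>\<^sup>2 \<le> (L * norm (x - y))\<^sup>2"
        using lip[OF \<delta> \<delta>, of x z y] by (simp add: power_mult_distrib)
      thus "\<bar>h x \<delta> z - h y \<delta> z\<bar> \<le> L * norm (x - y)"
        by (rule power2_le_imp_le) (use L_pos in simp)
    qed
    show "norm (gw w \<delta> z) \<le> L" by (rule deriv_norm_bound[OF d lipx]) (use L_pos in simp)
  qed
  define a where "a = aw * \<beta>"
  define e where "e = ad * eps * \<psi> * \<beta>"
  define q where "q = 1 + a + e"
  define d where "d = norm (w_prev - w'_prev)"
  define \<kappa> where "\<kappa> = 2 * L / (real b * \<beta>)"
  define r where "r = \<beta> * c / real t * q ^ (m - 1)"
  have a0: "a \<ge> 0" and e0: "e \<ge> 0" and q1: "q \<ge> 1" and d0p: "d \<ge> 0" and \<kappa>0: "\<kappa> \<ge> 0"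
    using aw_pos beta_pos ad_pos eps_pos psi_pos L_pos
    by (auto simp: a_def e_def q_def d_def \<kappa>_def)
  have perB: "\<And>B. B \<in> batches n b \<Longrightarrow>
      norm (free_outer gw gd eps aw ad m S B w_prev d0 - free_outer gw gd eps aw ad m S' B w'_prev d0)
      \<le> d + r * (d + (if s \<in> B then \<kappa> else 0))"
  proof -
    fix B assume B: "B \<in> batches n b"
    define K where "K = (if s \<in> B then \<kappa> else 0)"
    have K0: "K \<ge> 0" using \<kappa>0 by (simp add: K_def)
    define st where "st i = free_state gw gd eps aw ad S B w_prev d0 i" for i
    define st' where "st' i = free_state gw gd eps aw ad S' B w'_prev d0 i" for i
    have fB: "finite B" "card B = b" using B by (auto simp: batches_def intro: finite_subset)
    have stS: "\<And>i. st (Suc i) = free_inner_step gw gd eps aw ad S B (st i)"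
      by (simp add: st_def free_state_def)
    have stS': "\<And>i. st' (Suc i) = free_inner_step gw gd eps aw ad S' B (st' i)"
      by (simp add: st'_def free_state_def)
    have st0: "st 0 = (w_prev, d0)" "st' 0 = (w'_prev, d0)"
      by (simp_all add: st_def st'_def free_state_def)
    have inP: "\<And>i j. snd (st i) j \<in> ?P"
    proof -
      fix i j show "snd (st i) j \<in> ?P"
        by (induction i) (auto simp: st0 stS free_inner_step_def Let_def proj_in d0_in)
    qed
    have inP': "\<And>i j. snd (st' i) j \<in> ?P"
    proof -
      fix i j show "snd (st' i) j \<in> ?P"
        by (induction i) (auto simp: st0 stS' free_inner_step_def Let_def proj_in d0_in)
    qed
    have main: "i \<le> m \<Longrightarrow>
      (\<forall>j\<in>B - {s}. norm (snd (st i) j - snd (st' i) j) \<le> q ^ i * (d + K) - K - norm (fst (st i) - fst (st' i)))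
      \<and> norm (fst (st i) - fst (st' i)) \<le> d + a * (\<Sum>k<i. q ^ k) * (d + K)" for i
    proof (induction i)
      case 0
      show ?case by (simp add: st0 d_def)
    next
      case (Suc i)
      hence im: "i < m" by simp
      from Suc have IH: "\<forall>j\<in>B - {s}. norm (snd (st i) j - snd (st' i) j) \<le> q ^ i * (d + K) - K - norm (fst (st i) - fst (st' i))"
        "norm (fst (st i) - fst (st' i)) \<le> d + a * (\<Sum>k<i. q ^ k) * (d + K)" by auto
      define W where "W = fst (st i)"
      define W' where "W' = fst (st' i)"
      define Dl where "Dl = snd (st i)"
      define Dl' where "Dl' = snd (st' i)"
      define D where "D = norm (W - W')"
      define Q where "Q = q ^ i * (d + K)"
      have QdK: "d + K \<le> Q" unfolding Q_def
        using mult_right_mono[OF one_le_power[OF q1, of i], of "d + K"] d0p K0 by simp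
      have IHa: "\<And>j. j \<in> B - {s} \<Longrightarrow> D + norm (Dl j - Dl' j) \<le> Q - K"
      proof -
        fix j assume "j \<in> B - {s}"
        from bspec[OF IH(1) this] show "D + norm (Dl j - Dl' j) \<le> Q - K"
          unfolding D_def W_def W'_def Dl_def Dl'_def Q_def by linarith
      qed
      have sm: "\<And>j. j \<in> B - {s} \<Longrightarrow>
          norm (gw W (Dl j) (S j) - gw W' (Dl' j) (S' j)) \<le> \<beta> * (D + norm (Dl j - Dl' j))
          \<and> norm (gd W (Dl j) (S j) - gd W' (Dl' j) (S' j)) \<le> \<beta> * (D + norm (Dl j - Dl' j))"
      proof -
        fix j assume j: "j \<in> B - {s}"
        hence Sj: "S' j = S j" using S_S' by auto
        have "(norm (gw W (Dl j) (S j) - gw W' (Dl' j) (S j)))\<^sup>2 + (norm (gd W (Dl j) (S j) - gd W' (Dl' j) (S j)))\<^sup>2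
            \<le> \<beta>\<^sup>2 * (D\<^sup>2 + (norm (Dl j - Dl' j))\<^sup>2)"
          using smooth[OF inP inP'] by (simp add: D_def Dl_def Dl'_def)
        from sq_split_bound[OF this] beta_pos show "?thesis j" by (simp add: Sj D_def)
      qed
      have gws: "s \<in> B \<Longrightarrow> norm (gw W (Dl s) (S s) - gw W' (Dl' s) (S' s)) \<le> 2 * L"
      proof -
        have "norm (gw W (Dl s) (S s)) \<le> L" using gwb[OF inP[of i s]] by (simp add: Dl_def)
        moreover have "norm (gw W' (Dl' s) (S' s)) \<le> L" using gwb[OF inP'[of i s]] by (simp add: Dl'_def)
        ultimately show ?thesis
          using norm_triangle_ineq4[of "gw W (Dl s) (S s)" "gw W' (Dl' s) (S' s)"] by linarith
      qed
      have Q_K0: "Q - K \<ge> 0" using QdK d0p by linarith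
      have sumb: "(\<Sum>j\<in>B. norm (gw W (Dl j) (S j) - gw W' (Dl' j) (S' j))) \<le> real b * \<beta> * Q"
      proof (cases "s \<in> B")
        case True
        have "(\<Sum>j\<in>B. norm (gw W (Dl j) (S j) - gw W' (Dl' j) (S' j)))
            = norm (gw W (Dl s) (S s) - gw W' (Dl' s) (S' s))
              + (\<Sum>j\<in>B - {s}. norm (gw W (Dl j) (S j) - gw W' (Dl' j) (S' j)))"
          using sum.remove[OF fB(1) True] by simp
        also have "\<dots> \<le> 2 * L + (\<Sum>j\<in>B - {s}. \<beta> * (Q - K))"
        proof (rule add_mono[OF gws[OF True] sum_mono])
          fix j assume j: "j \<in> B - {s}"
          show "norm (gw W (Dl j) (S j) - gw W' (Dl' j) (S' j)) \<le> \<beta> * (Q - K)"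
            using sm[OF j] IHa[OF j] mult_left_mono[OF IHa[OF j], of \<beta>] beta_pos by linarith
        qed
        also have "\<dots> = 2 * L + (real b - 1) * \<beta> * (Q - K)"
          using fB True b_pos by (simp add: of_nat_diff)
        also have "\<dots> \<le> 2 * L + real b * \<beta> * (Q - K)"
          using Q_K0 beta_pos by (simp add: mult_right_mono)
        also have "2 * L = real b * \<beta> * K"
          using True b_pos beta_pos by (simp add: K_def \<kappa>_def)
        finally show ?thesis by (simp add: algebra_simps)
      next
        case False
        have "(\<Sum>j\<in>B. norm (gw W (Dl j) (S j) - gw W' (Dl' j) (S' j))) \<le> (\<Sum>j\<in>B. \<beta> * (Q - K))"
        proof (rule sum_mono)
          fix j assume "j \<in> B" hence j: "j \<in> B - {s}" using False by auto
          show "norm (gw W (Dl j) (S j) - gw W' (Dl' j) (S' j)) \<le> \<beta> * (Q - K)"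
            using sm[OF j] IHa[OF j] mult_left_mono[OF IHa[OF j], of \<beta>] beta_pos by linarith
        qed
        thus ?thesis using False fB by (simp add: K_def)
      qed
      have Wnext: "fst (st (Suc i)) - fst (st' (Suc i))
          = (W - W') - (aw / real b) *\<^sub>R (\<Sum>j\<in>B. gw W (Dl j) (S j) - gw W' (Dl' j) (S' j))"
        by (simp add: stS stS' free_inner_step_def Let_def W_def W'_def Dl_def Dl'_def fB
            sum_subtractf scaleR_diff_right algebra_simps)
      have Dnext: "norm (fst (st (Suc i)) - fst (st' (Suc i))) \<le> D + a * Q"
      proof -
        have "norm (fst (st (Suc i)) - fst (st' (Suc i)))
            \<le> D + (aw / real b) * norm (\<Sum>j\<in>B. gw W (Dl j) (S j) - gw W' (Dl' j) (S' j))"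
          unfolding Wnext D_def
          using norm_triangle_ineq4[of "W - W'" "(aw / real b) *\<^sub>R (\<Sum>j\<in>B. gw W (Dl j) (S j) - gw W' (Dl' j) (S' j))"]
            aw_pos by (simp add: abs_of_pos)
        also have "\<dots> \<le> D + (aw / real b) * (\<Sum>j\<in>B. norm (gw W (Dl j) (S j) - gw W' (Dl' j) (S' j)))"
          using aw_pos b_pos norm_sum[of "\<lambda>j. gw W (Dl j) (S j) - gw W' (Dl' j) (S' j)" B]
          by (intro add_left_mono mult_left_mono) auto
        also have "\<dots> \<le> D + (aw / real b) * (real b * \<beta> * Q)"
          using aw_pos sumb by (intro add_left_mono mult_left_mono) auto
        also have "\<dots> = D + a * Q" using b_pos by (simp add: a_def)
        finally show ?thesis .
      qed
      show ?case
      proof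
        show "norm (fst (st (Suc i)) - fst (st' (Suc i))) \<le> d + a * (\<Sum>k<Suc i. q ^ k) * (d + K)"
        proof -
          have "a * (\<Sum>k<Suc i. q ^ k) * (d + K) = a * (\<Sum>k<i. q ^ k) * (d + K) + a * Q"
            by (simp add: Q_def algebra_simps)
          thus ?thesis using Dnext IH(2) by (simp add: D_def W_def W'_def)
        qed
        show "\<forall>j\<in>B - {s}. norm (snd (st (Suc i)) j - snd (st' (Suc i)) j)
            \<le> q ^ Suc i * (d + K) - K - norm (fst (st (Suc i)) - fst (st' (Suc i)))"
        proof
          fix j assume j: "j \<in> B - {s}"
          hence jB: "j \<in> B" and Sj: "S' j = S j" using S_S' by auto
          define u where "u = gd W (Dl j) (S j)"
          define v where "v = gd W' (Dl' j) (S' j)"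
          have nu: "norm u \<ge> 1 / \<psi>" unfolding u_def W_def Dl_def st_def using grad_lb[OF B im jB] .
          have nv: "norm v \<ge> 1 / \<psi>" unfolding v_def W'_def Dl'_def st'_def using grad_lb'[OF B im jB] .
          have pil: "norm (pi_Delta eps u - pi_Delta eps v) \<le> eps * \<psi> * norm (u - v)"
            using pi_lip[OF nu nv, of eps] psi_pos eps_pos by (simp add: pi_Delta_def)
          have uv: "norm (u - v) \<le> \<beta> * (D + norm (Dl j - Dl' j))"
            using sm[OF j] by (simp add: u_def v_def)
          have "snd (st (Suc i)) j - snd (st' (Suc i)) j
              = proj_Delta eps (Dl j + ad *\<^sub>R pi_Delta eps u) - proj_Delta eps (Dl' j + ad *\<^sub>R pi_Delta eps v)"
            using jB by (simp add: stS stS' free_inner_step_def Let_def Dl_def Dl'_def u_def v_def W_def W'_def)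
          hence "norm (snd (st (Suc i)) j - snd (st' (Suc i)) j)
              \<le> norm ((Dl j + ad *\<^sub>R pi_Delta eps u) - (Dl' j + ad *\<^sub>R pi_Delta eps v))"
            by (simp only:) (rule proj_lip)
          also have "\<dots> = norm ((Dl j - Dl' j) + ad *\<^sub>R (pi_Delta eps u - pi_Delta eps v))"
            by (simp add: algebra_simps)
          also have "\<dots> \<le> norm (Dl j - Dl' j) + ad * norm (pi_Delta eps u - pi_Delta eps v)"
            using norm_triangle_ineq[of "Dl j - Dl' j" "ad *\<^sub>R (pi_Delta eps u - pi_Delta eps v)"] ad_pos
            by (simp add: abs_of_pos)
          also have "\<dots> \<le> norm (Dl j - Dl' j) + ad * (eps * \<psi> * (\<beta> * (D + norm (Dl j - Dl' j))))"
          proof -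
            have "eps * \<psi> * norm (u - v) \<le> eps * \<psi> * (\<beta> * (D + norm (Dl j - Dl' j)))"
              using uv eps_pos psi_pos by (simp add: mult_left_mono)
            hence "norm (pi_Delta eps u - pi_Delta eps v) \<le> eps * \<psi> * (\<beta> * (D + norm (Dl j - Dl' j)))"
              using pil by linarith
            hence "ad * norm (pi_Delta eps u - pi_Delta eps v) \<le> ad * (eps * \<psi> * (\<beta> * (D + norm (Dl j - Dl' j))))"
              using ad_pos by (intro mult_left_mono) auto
            thus ?thesis by linarith
          qed
          also have "\<dots> = norm (Dl j - Dl' j) + e * (D + norm (Dl j - Dl' j))"
            by (simp add: e_def)
          also have "\<dots> \<le> norm (Dl j - Dl' j) + e * (Q - K)"
            using IHa[OF j] e0 by (simp add: mult_left_mono)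
          also have "\<dots> \<le> q * Q - K - (D + a * Q)"
          proof -
            have "q * Q = Q + a * Q + e * Q" by (simp add: q_def algebra_simps)
            moreover have "e * K \<ge> 0" using e0 K0 by simp
            ultimately show ?thesis using IHa[OF j] by (simp add: right_diff_distrib)
          qed
          also have "\<dots> \<le> q ^ Suc i * (d + K) - K - norm (fst (st (Suc i)) - fst (st' (Suc i)))"
            using Dnext by (simp add: Q_def)
          finally show "norm (snd (st (Suc i)) j - snd (st' (Suc i)) j)
            \<le> q ^ Suc i * (d + K) - K - norm (fst (st (Suc i)) - fst (st' (Suc i)))" .
        qed
      qed
    qed
    show "norm (free_outer gw gd eps aw ad m S B w_prev d0 - free_outer gw gd eps aw ad m S' B w'_prev d0)
      \<le> d + r * (d + (if s \<in> B then \<kappa> else 0))"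
    proof -
      have fm: "norm (fst (st m) - fst (st' m)) \<le> d + a * (\<Sum>k<m. q ^ k) * (d + K)"
        using main[of m] by simp
      have sumq: "(\<Sum>k<m. q ^ k) \<le> real m * q ^ (m - 1)"
      proof -
        have "(\<Sum>k<m. q ^ k) \<le> (\<Sum>k<m. q ^ (m - 1))"
          by (rule sum_mono) (use q1 in \<open>auto intro!: power_increasing\<close>)
        thus ?thesis by simp
      qed
      have am: "a * real m \<le> \<beta> * c / real t"
      proof -
        have "aw * real m \<le> c / (real m * real t) * real m"
          by (rule mult_right_mono[OF aw_le]) simp
        also have "\<dots> = c / real t" using m_pos by simp
        finally have "aw * real m \<le> c / real t" .
        hence "\<beta> * (aw * real m) \<le> \<beta> * (c / real t)" using beta_pos by (intro mult_left_mono) auto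
        thus ?thesis by (simp add: a_def mult_ac)
      qed
      have dK: "d + K \<ge> 0" using d0p K0 by simp
      have "a * (\<Sum>k<m. q ^ k) * (d + K) \<le> a * (real m * q ^ (m - 1)) * (d + K)"
        by (rule mult_right_mono[OF mult_left_mono[OF sumq a0] dK])
      also have "\<dots> = (a * real m) * (q ^ (m - 1) * (d + K))" by (simp add: mult_ac)
      also have "\<dots> \<le> (\<beta> * c / real t) * (q ^ (m - 1) * (d + K))"
        using am dK q1 by (intro mult_right_mono) auto
      also have "\<dots> = r * (d + K)" by (simp add: r_def mult_ac)
      finally have "norm (fst (st m) - fst (st' m)) \<le> d + r * (d + K)" using fm by linarith
      thus ?thesis by (simp add: free_outer_def st_def st'_def K_def)
    qed
  qed
  have finB: "finite (batches n b)"
    by (rule finite_subset[of _ "Pow {..<n}"]) (auto simp: batches_def)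
  have neB: "batches n b \<noteq> {}"
    using b_le by (auto simp: batches_def intro!: exI[of _ "{..<b}"])
  define N where "N = real (card (batches n b))"
  define M where "M = real (card {B \<in> batches n b. s \<in> B})"
  have N0: "N > 0" using finB neB by (simp add: N_def card_gt_0_iff)
  have MN: "M * real n = real b * N"
    using card_batches_s[OF s_lt b_pos] by (simp add: M_def N_def)
  have n0: "real n > 0" using s_lt by simp
  have b0: "real b > 0" using b_pos by simp
  have kM: "\<kappa> * M = 2 * L / (real n * \<beta>) * N"
  proof -
    have "M = real b * N / real n" using MN n0 by (simp add: field_simps)
    thus ?thesis using b0 n0 beta_pos by (simp add: \<kappa>_def field_simps)
  qed
  let ?f = "\<lambda>B. norm (free_outer gw gd eps aw ad m S B w_prev d0 - free_outer gw gd eps aw ad m S' B w'_prev d0)"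
  have "measure_pmf.expectation (pmf_of_set (batches n b)) ?f = sum ?f (batches n b) / N"
    using integral_pmf_of_set[OF neB finB] by (simp add: N_def)
  also have "\<dots> \<le> (\<Sum>B\<in>batches n b. d + r * (d + (if s \<in> B then \<kappa> else 0))) / N"
    using N0 perB by (intro divide_right_mono sum_mono) auto
  also have "(\<Sum>B\<in>batches n b. d + r * (d + (if s \<in> B then \<kappa> else 0))) = N * (d + r * d) + r * (\<kappa> * M)"
  proof -
    have "(\<Sum>B\<in>batches n b. (if s \<in> B then \<kappa> else 0)) = \<kappa> * M"
      using sum.inter_filter[OF finB, of "\<lambda>_. \<kappa>" "\<lambda>B. s \<in> B", symmetric] by (simp add: M_def)
    thus ?thesis
      by (simp add: sum.distrib sum_distrib_left[symmetric] N_def algebra_simps)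
  qed
  also have "(N * (d + r * d) + r * (\<kappa> * M)) / N = d + r * d + r * (2 * L / (real n * \<beta>))"
    unfolding kM using N0 by (simp add: field_simps)
  finally have E: "measure_pmf.expectation (pmf_of_set (batches n b)) ?f
      \<le> d + r * d + r * (2 * L / (real n * \<beta>))" .
  have "(1 + r) * (d + 2 * L / (real n * \<beta>)) = d + r * d + r * (2 * L / (real n * \<beta>)) + 2 * L / (real n * \<beta>)"
    by (simp only: ring_distribs mult_1_left)
  hence fin: "measure_pmf.expectation (pmf_of_set (batches n b)) ?f + 2 * L / (real n * \<beta>)
      \<le> (1 + r) * (d + 2 * L / (real n * \<beta>))" using E by linarith
  have rr: "r = \<beta> * c / real t * (1 + aw * \<beta> + ad * eps * \<psi> * \<beta>) ^ (m - 1)"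
    unfolding r_def q_def a_def e_def by (rule refl)
  show ?thesis using fin unfolding rr d_def .
qed

end
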